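(* Let $\mathcal D_{red}$ be a reduced datum of finite Cartan type and $l=(l_i)$ a family of nonzero scalars, and let $E_i=y_i$, $F_i=x_iL_i^{-1}$ in $U(\mathcal D_{red},l)$. For each connected component $J$ of the Dynkin diagram of $(a_{ij})$ choose $d_i\in\{1,2,3\}$ ($i\in J$) and $q_J\in k$ with $q_{ii}=q_J^{2d_i}$ and $d_ia_{ij}=d_ja_{ji}$ for $i,j\in J$, and set $p_{ij}=q_{ij}q_J^{-d_ia_{ij}}$ if $i,j\in J$, $p_{ij}=q_{ij}$ if $i,j$ are in different components. Then the defining relations of $U(\mathcal D_{red},l)$ are equivalent, in $U(\mathcal D_{red},l)$, to: for all $i\ne j$ with $i\in J$, $$\sum_{s=0}^{1-a_{ij}}(-p_{ij})^s\begin{bmatrix}1-a_{ij}\\ s\end{bmatrix}_{q_J^{d_i}}E_i^{1-a_{ij}-s}E_jE_i^s=0,\qquad \sum_{s=0}^{1-a_{ij}}(-p_{ij}^{-1})^s\begin{bmatrix}1-a_{ij}\\ s\end{bmatrix}_{q_J^{d_i}}F_i^{1-a_{ij}-s}F_jF_i^s=0,$$ and for all $i,j$: $E_iF_j-F_jE_i=\delta_{ij}q_{ii}^{-1}l_i(K_i-L_i^{-1})$. Moreover, $gE_ig^{-1}=\chi_i(g)E_i$, $gF_ig^{-1}=\chi_i^{-1}(g)F_i$ for $g\in\Gamma$, and $\Delta(E_i)=K_i\otimes E_i+E_i\otimes1$, $\Delta(F_i)=1\otimes F_i+F_i\otimes L_i^{-1}$.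
   Context: $k$ is an algebraically closed field of characteristic zero; $\widehat\Gamma$ is the character group of the abelian group $\Gamma$. A reduced datum of finite Cartan type $\mathcal D_{red}=\mathcal D_{red}(\Gamma,(L_i)_{1\le i\le n},(K_i)_{1\le i\le n},(\chi_i)_{1\le i\le n},(a_{ij}))$ consists of $n\ge1$, $L_i,K_i\in\Gamma$, $\chi_i\in\widehat\Gamma$, a Cartan matrix $(a_{ij})$ of finite type with $\chi_i(K_j)\chi_j(K_i)=\chi_i(K_i)^{a_{ij}}$, $\chi_i(L_j)=\chi_j(K_i)$, $K_iL_i\ne1$, $\chi_i(K_i)\ne1$. $q_{ij}=\chi_j(K_i)$. $U(\mathcal D_{red},l)$ is the quotient Hopf algebra of the smash product $k\langle x_1,\dots,x_n,y_1,\dots,y_n\rangle\#k[\Gamma]$, where $gx_ig^{-1}=\chi_i^{-1}(g)x_i$, $gy_ig^{-1}=\chi_i(g)y_i$, $\Delta(x_i)=L_i\otimes x_i+x_i\otimes1$, $\Delta(y_i)=K_i\otimes y_i+y_i\otimes1$, $\Delta(g)=g\otimes g$, by the ideal generated by $\operatorname{ad}_c(x_i)^{1-a_{ij}}(x_j)$, $\operatorname{ad}_c(y_i)^{1-a_{ij}}(y_j)$ ($i\ne j$) and $x_iy_j-\chi_j(L_i)y_jx_i-\delta_{ij}l_i(1-K_iL_i)$, with $\operatorname{ad}_c(x_i)(w)=x_iw-(L_iwL_i^{-1})x_i$, $\operatorname{ad}_c(y_i)(w)=y_iw-(K_iwK_i^{-1})y_i$. Gaussian binomials: with $[n]=\frac{v^n-v^{-n}}{v-v^{-1}}$,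 $[n]^!=[1]\cdots[n]$, $\begin{bmatrix}n\\ i\end{bmatrix}=\frac{[n]^!}{[i]^![n-i]^!}$, and $\begin{bmatrix}n\\ i\end{bmatrix}_q$ its specialization $v\mapsto q$. *)

theory Defs
  imports "HOL-Computational_Algebra.Polynomial"
begin

definition alg_closed :: "'k::field itself \<Rightarrow> bool" where
  "alg_closed _ \<longleftrightarrow> (\<forall>p::'k poly. degree p > 0 \<longrightarrow> (\<exists>z. poly p z = 0))"

text \<open>The abelian group Gamma is written additively (type class ab_group_add):
  the product g h is g + h, the unit is 0, the inverse of g is - g.\<close>

definition is_character :: "('g::ab_group_add \<Rightarrow> 'k::field) \<Rightarrow> bool" where
  "is_character c \<longleftrightarrow> (\<forall>g h. c (g + h) = c g * c h) \<and> c 0 = 1"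

definition gen_cartan :: "nat \<Rightarrow> (nat \<Rightarrow> nat \<Rightarrow> int) \<Rightarrow> bool" where
  "gen_cartan n a \<longleftrightarrow> (\<forall>i<n. a i i = 2) \<and> (\<forall>i<n. \<forall>j<n. i \<noteq> j \<longrightarrow> a i j \<le> 0)
     \<and> (\<forall>i<n. \<forall>j<n. a i j = 0 \<longleftrightarrow> a j i = 0)"

definition cartan_finite_type :: "nat \<Rightarrow> (nat \<Rightarrow> nat \<Rightarrow> int) \<Rightarrow> bool" where
  "cartan_finite_type n a \<longleftrightarrow> gen_cartan n a \<and>
     (\<exists>e::nat \<Rightarrow> real. (\<forall>i<n. e i > 0) \<and> (\<forall>i<n. \<forall>j<n. e i * of_int (a i j) = e j * of_int (a j i))
        \<and> (\<forall>v::nat \<Rightarrow> real. (\<exists>i<n. v i \<noteq> 0) \<longrightarrow>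
              (\<Sum>i<n. \<Sum>j<n. e i * of_int (a i j) * v i * v j) > 0))"

definition dynkin_adj :: "nat \<Rightarrow> (nat \<Rightarrow> nat \<Rightarrow> int) \<Rightarrow> nat \<Rightarrow> nat \<Rightarrow> bool" where
  "dynkin_adj n a i j \<longleftrightarrow> i < n \<and> j < n \<and> i \<noteq> j \<and> a i j \<noteq> 0"

definition same_component :: "nat \<Rightarrow> (nat \<Rightarrow> nat \<Rightarrow> int) \<Rightarrow> nat \<Rightarrow> nat \<Rightarrow> bool" where
  "same_component n a i j \<longleftrightarrow> (dynkin_adj n a)\<^sup>*\<^sup>* i j"

definition reduced_datum ::
  "nat \<Rightarrow> (nat \<Rightarrow> 'g::ab_group_add) \<Rightarrow> (nat \<Rightarrow> 'g) \<Rightarrow> (nat \<Rightarrow> 'g \<Rightarrow> 'k::field)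
     \<Rightarrow> (nat \<Rightarrow> nat \<Rightarrow> int) \<Rightarrow> bool" where
  "reduced_datum n L K \<chi> a \<longleftrightarrow> n \<ge> 1 \<and> cartan_finite_type n a
     \<and> (\<forall>i<n. is_character (\<chi> i))
     \<and> (\<forall>i<n. \<forall>j<n. \<chi> i (K j) * \<chi> j (K i) = \<chi> i (K i) powi (a i j))
     \<and> (\<forall>i<n. \<forall>j<n. \<chi> i (L j) = \<chi> j (K i))
     \<and> (\<forall>i<n. K i + L i \<noteq> 0)
     \<and> (\<forall>i<n. \<chi> i (K i) \<noteq> 1)"

definition qpar :: "(nat \<Rightarrow> 'g) \<Rightarrow> (nat \<Rightarrow> 'g \<Rightarrow> 'k) \<Rightarrow> nat \<Rightarrow> nat \<Rightarrow> 'k" where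
  "qpar K \<chi> i j = \<chi> j (K i)"

text \<open>gauss_binom v m s is the specialisation v := v of the Laurent polynomial
  [m choose s] = [m]!/([s]![m-s]!), [m] = (v^m - v^-m)/(v - v^-1); it is computed by the
  q-Pascal rule [m+1, s+1] = v^(s+1) [m, s+1] + v^(-(m-s)) [m, s], which holds in Z[v,v^-1].\<close>

fun gauss_binom :: "'k::field \<Rightarrow> nat \<Rightarrow> nat \<Rightarrow> 'k" where
  "gauss_binom v 0 s = (if s = 0 then 1 else 0)"
| "gauss_binom v (Suc m) 0 = 1"
| "gauss_binom v (Suc m) (Suc s) =
     v powi (int (Suc s)) * gauss_binom v m (Suc s) + v powi (- (int m - int s)) * gauss_binom v m s"

text \<open>A k-algebra is a ring 'a with a unital ring homomorphism sc : k \<rightarrow> 'a into the centre;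
  scalar multiplication c . z is sc c * z.\<close>

definition k_algebra :: "('k::field \<Rightarrow> 'a::ring_1) \<Rightarrow> bool" where
  "k_algebra sc \<longleftrightarrow> (\<forall>c d. sc (c + d) = sc c + sc d) \<and> (\<forall>c d. sc (c * d) = sc c * sc d)
     \<and> sc 1 = 1 \<and> (\<forall>c z. sc c * z = z * sc c)"

definition k_alg_hom :: "('k::field \<Rightarrow> 'a::ring_1) \<Rightarrow> ('k \<Rightarrow> 'b::ring_1) \<Rightarrow> ('a \<Rightarrow> 'b) \<Rightarrow> bool" where
  "k_alg_hom scA scB f \<longleftrightarrow> (\<forall>u v. f (u + v) = f u + f v) \<and> (\<forall>u v. f (u * v) = f u * f v)
     \<and> f 1 = 1 \<and> (\<forall>c. f (scA c) = scB c)"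

definition group_into :: "('g::ab_group_add \<Rightarrow> 'a::ring_1) \<Rightarrow> bool" where
  "group_into \<gamma> \<longleftrightarrow> (\<forall>g h. \<gamma> (g + h) = \<gamma> g * \<gamma> h) \<and> \<gamma> 0 = 1"

text \<open>Relations of the smash product k<x,y> # k[Gamma] (images of group elements under gamma).\<close>

definition smash_relations ::
  "nat \<Rightarrow> (nat \<Rightarrow> 'g::ab_group_add \<Rightarrow> 'k::field) \<Rightarrow> ('k \<Rightarrow> 'a::ring_1) \<Rightarrow> ('g \<Rightarrow> 'a)
     \<Rightarrow> (nat \<Rightarrow> 'a) \<Rightarrow> (nat \<Rightarrow> 'a) \<Rightarrow> bool" where
  "smash_relations n \<chi> sc \<gamma> x y \<longleftrightarrow> k_algebra sc \<and> group_into \<gamma> \<and>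
     (\<forall>i<n. \<forall>g. \<gamma> g * x i * \<gamma> (- g) = sc (inverse (\<chi> i g)) * x i
              \<and> \<gamma> g * y i * \<gamma> (- g) = sc (\<chi> i g) * y i)"

definition ad_c :: "'a::ring_1 \<Rightarrow> 'a \<Rightarrow> 'a \<Rightarrow> 'a \<Rightarrow> 'a" where
  "ad_c h hinv z w = z * w - h * w * hinv * z"

text \<open>Defining relations of U(D_red, l) (in addition to the smash product relations).\<close>
definition U_relations ::
  "nat \<Rightarrow> (nat \<Rightarrow> 'g::ab_group_add) \<Rightarrow> (nat \<Rightarrow> 'g) \<Rightarrow> (nat \<Rightarrow> 'g \<Rightarrow> 'k::field)
     \<Rightarrow> (nat \<Rightarrow> nat \<Rightarrow> int) \<Rightarrow> (nat \<Rightarrow> 'k) \<Rightarrow> ('k \<Rightarrow> 'a::ring_1) \<Rightarrow> ('g \<Rightarrow> 'a)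
     \<Rightarrow> (nat \<Rightarrow> 'a) \<Rightarrow> (nat \<Rightarrow> 'a) \<Rightarrow> bool" where
  "U_relations n L K \<chi> a l sc \<gamma> x y \<longleftrightarrow>
     (\<forall>i<n. \<forall>j<n. i \<noteq> j \<longrightarrow>
        (ad_c (\<gamma> (L i)) (\<gamma> (- L i)) (x i) ^^ nat (1 - a i j)) (x j) = 0 \<and>
        (ad_c (\<gamma> (K i)) (\<gamma> (- K i)) (y i) ^^ nat (1 - a i j)) (y j) = 0)
   \<and> (\<forall>i<n. \<forall>j<n. x i * y j - sc (\<chi> j (L i)) * y j * x i
                     = (if i = j then sc (l i) * (1 - \<gamma> (K i + L i)) else 0))"

text \<open>The coefficients p_ij; qc i is q_J for the component J containing i.\<close>
definition pcoef ::
  "nat \<Rightarrow> (nat \<Rightarrow> nat \<Rightarrow> int) \<Rightarrow> (nat \<Rightarrow> 'g) \<Rightarrow> (nat \<Rightarrow> 'g \<Rightarrow> 'k::field)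
     \<Rightarrow> (nat \<Rightarrow> nat) \<Rightarrow> (nat \<Rightarrow> 'k) \<Rightarrow> nat \<Rightarrow> nat \<Rightarrow> 'k" where
  "pcoef n a K \<chi> d qc i j =
     (if same_component n a i j then qpar K \<chi> i j * qc i powi (- (int (d i) * a i j))
      else qpar K \<chi> i j)"

text \<open>The new presentation, with E i = y i and F i = x i * L_i^-1.\<close>
definition new_relations ::
  "nat \<Rightarrow> (nat \<Rightarrow> 'g::ab_group_add) \<Rightarrow> (nat \<Rightarrow> 'g) \<Rightarrow> (nat \<Rightarrow> 'g \<Rightarrow> 'k::field)
     \<Rightarrow> (nat \<Rightarrow> nat \<Rightarrow> int) \<Rightarrow> (nat \<Rightarrow> 'k) \<Rightarrow> (nat \<Rightarrow> nat) \<Rightarrow> (nat \<Rightarrow> 'k)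
     \<Rightarrow> ('k \<Rightarrow> 'a::ring_1) \<Rightarrow> ('g \<Rightarrow> 'a) \<Rightarrow> (nat \<Rightarrow> 'a) \<Rightarrow> (nat \<Rightarrow> 'a) \<Rightarrow> bool" where
  "new_relations n L K \<chi> a l d qc sc \<gamma> E F \<longleftrightarrow>
     (\<forall>i<n. \<forall>j<n. i \<noteq> j \<longrightarrow>
        (\<Sum>s = 0..nat (1 - a i j).
            sc ((- pcoef n a K \<chi> d qc i j) ^ s * gauss_binom (qc i ^ d i) (nat (1 - a i j)) s)
              * E i ^ (nat (1 - a i j) - s) * E j * E i ^ s) = 0 \<and>
        (\<Sum>s = 0..nat (1 - a i j).
            sc ((- inverse (pcoef n a K \<chi> d qc i j)) ^ s * gauss_binom (qc i ^ d i) (nat (1 - a i j)) s)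
              * F i ^ (nat (1 - a i j) - s) * F j * F i ^ s) = 0)
   \<and> (\<forall>i<n. \<forall>j<n. E i * F j - F j * E i
         = (if i = j then sc (inverse (qpar K \<chi> i i) * l i) * (\<gamma> (K i) - \<gamma> (- L i)) else 0))"

end

theory Submission
  imports Defs
begin


lemma gb_zero: "m < s \<Longrightarrow> gauss_binom v m s = 0"
  by (induction v m s rule: gauss_binom.induct) auto

lemma gb_0 [simp]: "gauss_binom v m 0 = 1" by (cases m) auto

lemma gb_Suc: "gauss_binom v (Suc m) (Suc s) =
     v powi (int s + 1) * gauss_binom v m (Suc s) + v powi (int s - int m) * gauss_binom v m s"
  by (simp add: add.commute)

lemma powi_m1: "(v::'k::field) \<noteq> 0 \<Longrightarrow> v powi (k - 1) = v powi k / v"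
  using power_int_diff[of v k 1] by simp

lemma powi_p1: "(v::'k::field) \<noteq> 0 \<Longrightarrow> v powi (k + 1) = v powi k * v"
  using power_int_add[of v k 1] by simp

lemma gb_absorb:
  fixes v :: "'k::field" assumes v: "v \<noteq> 0"
  shows "(v powi (int s + 1) - v powi (-(int s + 1))) * gauss_binom v m (Suc s)
       = (v powi (int m - int s) - v powi (int s - int m)) * gauss_binom v m s"
proof (induction m arbitrary: s)
  case 0
  then show ?case by (cases s) auto
next
  case (Suc m)
  note IHo = Suc.IH
  show ?case
  proof (cases s)
    case 0
    have IH: "(v - inverse v) * gauss_binom v m 1 = v^m - inverse (v^m)"
      using IHo[of 0] by (simp add: power_int_minus)
    have "(v powi (int s + 1) - v powi (-(int s + 1))) * gauss_binom v (Suc m) (Suc s)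
        = (v - inverse v) * (v * gauss_binom v m 1 + inverse (v^m))"
      using 0 by (simp add: power_int_minus)
    also have "\<dots> = v * ((v - inverse v) * gauss_binom v m 1) + (v - inverse v) * inverse (v^m)"
      by (simp add: algebra_simps)
    also have "\<dots> = v^(Suc m) - inverse (v^(Suc m))"
      unfolding IH using v by (simp add: field_simps)
    moreover have "v powi (int (Suc m) - int s) = v^(Suc m)"
      using 0 by (simp only: diff_zero of_nat_0 power_int_of_nat)
    moreover have "v powi (int s - int (Suc m)) = inverse (v^(Suc m))"
      using 0 v by (simp only: diff_0 of_nat_0 power_int_minus power_int_of_nat)
    ultimately show ?thesis using 0 by simp
  next
    case (Suc t)
    define A where "A = v powi (int m - int t)"
    define B where "B = v powi (int t)"
    have A0: "A \<noteq> 0" and B0: "B \<noteq> 0" using v by (auto simp: A_def B_def)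
    define X where "X = gauss_binom v m (Suc t)"
    have e1: "v powi (int (Suc t) + 1) = B*v*v" unfolding B_def using v
        by (simp add: power_int_add algebra_simps power2_eq_square)
    have e1': "v powi (-(int (Suc t) + 1)) = inverse (B*v*v)"
      by (simp only: power_int_minus e1)
    have e0: "v powi (int m - int (Suc t)) = A / v" unfolding A_def using v
        powi_m1[of v "int m - int t"] by (simp add: algebra_simps)
    have e2: "v powi (int (Suc t) - int m) = v / A" unfolding A_def using v
        powi_p1[of v "int t - int m"] power_int_minus[of v "int m - int t"]
        by (simp add: algebra_simps divide_inverse)
    have e3: "v powi (int t + 1) = B*v" unfolding B_def using v
        by (simp add: power_int_add algebra_simps power2_eq_square)
    have e3': "v powi (-(int t + 1)) = inverse (B*v)"
      by (simp only: power_int_minus e3)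
    have e4: "v powi (int t - int m) = inverse A" unfolding A_def using v
        by (simp add: power_int_minus[symmetric])
    have e5: "v powi (int (Suc m) - int (Suc t)) = A" unfolding A_def by simp
    have e6: "v powi (int (Suc t) - int (Suc m)) = inverse A" using e4 by simp
    have IH1: "(B*v*v - inverse (B*v*v)) * gauss_binom v m (Suc (Suc t)) = (A / v - v / A) * X"
      using IHo[of "Suc t"] unfolding e1 e1' e0 e2 X_def .
    have IH2: "(B*v - inverse (B*v)) * X = (A - inverse A) * gauss_binom v m t"
      using IHo[of t] unfolding e3 e3' e4 X_def A_def .
    have "(v powi (int s + 1) - v powi (-(int s + 1))) * gauss_binom v (Suc m) (Suc s)
       = (B*v*v - inverse (B*v*v)) * (B*v*v * gauss_binom v m (Suc (Suc t)) + v / A * X)"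
      unfolding Suc gb_Suc e1 e1' e2 X_def ..
    also have "\<dots> = B*v*v * ((B*v*v - inverse (B*v*v)) * gauss_binom v m (Suc (Suc t)))
        + (B*v*v - inverse (B*v*v)) * (v / A) * X" by (simp add: algebra_simps)
    also have "\<dots> = (B*v*v * (A / v - v / A) + (B*v*v - inverse (B*v*v)) * (v / A)) * X"
      unfolding IH1 by (simp add: algebra_simps)
    also have "\<dots> = ((A - inverse A) * (B*v) + inverse A * (B*v - inverse (B*v))) * X"
      using A0 B0 v by (simp add: field_simps)
    also have "\<dots> = (A - inverse A) * (B*v*X) + inverse A * ((B*v - inverse (B*v)) * X)"
      by (simp add: algebra_simps)
    also have "\<dots> = (A - inverse A) * (B*v*X + inverse A * gauss_binom v m t)"
      unfolding IH2 by (simp add: algebra_simps)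
    also have "\<dots> = (v powi (int (Suc m) - int s) - v powi (int s - int (Suc m))) * gauss_binom v (Suc m) s"
      unfolding Suc gb_Suc e3 e4 e5 e6 X_def ..
    finally show ?thesis .
  qed
qed

lemma gb_rule2:
  fixes v :: "'k::field" assumes v: "v \<noteq> 0"
  shows "gauss_binom v (Suc m) (Suc s) =
     v powi (-(int s + 1)) * gauss_binom v m (Suc s) + v powi (int m - int s) * gauss_binom v m s"
proof -
  have "gauss_binom v (Suc m) (Suc s) -
     (v powi (-(int s + 1)) * gauss_binom v m (Suc s) + v powi (int m - int s) * gauss_binom v m s)
    = (v powi (int s + 1) - v powi (-(int s + 1))) * gauss_binom v m (Suc s)
       - (v powi (int m - int s) - v powi (int s - int m)) * gauss_binom v m s"
    unfolding gb_Suc by (simp add: algebra_simps)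
  also have "\<dots> = 0" using gb_absorb[OF v, of s m] by simp
  finally show ?thesis by simp
qed

lemma gb_inv:
  fixes v :: "'k::field" assumes v: "v \<noteq> 0"
  shows "gauss_binom (inverse v) m s = gauss_binom v m s"
proof (induction m arbitrary: s)
  case 0 then show ?case by simp
next
  case (Suc m)
  show ?case
  proof (cases s)
    case 0 then show ?thesis by simp
  next
    case (Suc t)
    have "gauss_binom (inverse v) (Suc m) (Suc t) =
      inverse (v powi (int t + 1)) * gauss_binom v m (Suc t) + inverse (v powi (int t - int m)) * gauss_binom v m t"
      unfolding gb_Suc power_int_inverse Suc.IH ..
    also have "\<dots> = gauss_binom v (Suc m) (Suc t)"
      unfolding gb_rule2[OF v] power_int_minus[symmetric] by simp
    finally show ?thesis using Suc by simp
  qed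
qed

definition cc :: "'k::field \<Rightarrow> nat \<Rightarrow> nat \<Rightarrow> 'k" where
  "cc v m s = (-1)^s * v^(s*(m-1)) * gauss_binom v m s"

lemma cc_0 [simp]: "cc v m 0 = 1" by (simp add: cc_def)

lemma cc_zero: "m < s \<Longrightarrow> cc v m s = 0" by (simp add: cc_def gb_zero)

lemma cc_rec:
  fixes v :: "'k::field" assumes v: "v \<noteq> 0"
  shows "cc v (Suc m) (Suc t) = (v^2)^(Suc t) * cc v m (Suc t) - (v^2)^t * cc v m t"
proof (cases "t \<le> m")
  case False
  then have "m < t" by simp
  then have "cc v (Suc m) (Suc t) = 0" "cc v m (Suc t) = 0" "cc v m t = 0"
    by (auto intro!: cc_zero)
  then show ?thesis by (simp only: mult_zero_right diff_zero)
next
  case tm: True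
  show ?thesis
  proof (cases m)
    case 0
    then show ?thesis using tm by (simp add: cc_def gb_zero)
  next
    case (Suc m')
    define X where "X = gauss_binom v m (Suc t)"
    define Y where "Y = gauss_binom v m t"
    have G: "gauss_binom v (Suc m) (Suc t) = v^(t+1) * X + inverse (v^(m-t)) * Y"
    proof -
      have "v powi (int t - int m) = inverse (v^(m-t))"
      proof -
        have "int m - int t = int (m - t)" using of_nat_diff[OF tm] by (rule sym)
        then have "v powi (int m - int t) = v^(m-t)" by (simp only: power_int_of_nat)
        moreover have "int t - int m = - (int m - int t)" by (rule minus_diff_eq[symmetric])
        ultimately show ?thesis using power_int_minus[of v "int m - int t"] by (simp only:)
      qed
      moreover have "v powi (int t + 1) = v^(t+1)"
      proof -
        have "int t + 1 = int (t+1)" by (simp only: of_nat_add of_nat_1)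
        then show ?thesis by (simp only: power_int_of_nat)
      qed
      ultimately show ?thesis unfolding gb_Suc X_def Y_def by (simp only:)
    qed
    have p1: "v^((t+1)*m) * v^(t+1) = (v^2)^(t+1) * v^((t+1)*(m-1))"
    proof -
      have e: "(t+1)*m + (t+1) = 2*(t+1) + (t+1)*(m-1)" using Suc by simp
      have "v^((t+1)*m) * v^(t+1) = v^((t+1)*m + (t+1))" by (simp only: power_add)
      also have "\<dots> = v^(2*(t+1) + (t+1)*(m-1))" by (simp only: e)
      also have "\<dots> = (v^2)^(t+1) * v^((t+1)*(m-1))" by (simp only: power_add power_mult)
      finally show ?thesis .
    qed
    have p2: "v^((t+1)*m) * inverse (v^(m-t)) = (v^2)^t * v^(t*(m-1))"
    proof -
      have e: "(t+1)*m = (m-t) + (2*t + t*(m-1))" using Suc tm by (simp add: algebra_simps)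
      have "v^((t+1)*m) = v^((m-t) + (2*t + t*(m-1)))" by (simp only: e)
      also have "\<dots> = v^(m-t) * ((v^2)^t * v^(t*(m-1)))" by (simp only: power_add power_mult)
      finally have "v^((t+1)*m) = v^(m-t) * ((v^2)^t * v^(t*(m-1)))" .
      then show ?thesis using v by simp
    qed
    have "cc v (Suc m) (Suc t) = (-1)^(Suc t) * (v^((t+1)*m) * v^(t+1)) * X
        + (-1)^(Suc t) * (v^((t+1)*m) * inverse (v^(m-t))) * Y"
      unfolding cc_def G by (simp add: algebra_simps)
    also have "\<dots> = (v^2)^(Suc t) * cc v m (Suc t) - (v^2)^t * cc v m t"
      unfolding p1 p2 cc_def X_def Y_def by (simp add: algebra_simps)
    finally show ?thesis .
  qed
qed



lemma sc_add: "k_algebra sc \<Longrightarrow> sc (c + d) = sc c + sc d" unfolding k_algebra_def by blast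
lemma sc_mult: "k_algebra sc \<Longrightarrow> sc (c * d) = sc c * sc d" unfolding k_algebra_def by blast
lemma sc_1: "k_algebra sc \<Longrightarrow> sc 1 = 1" unfolding k_algebra_def by blast
lemma sc_cen: "k_algebra sc \<Longrightarrow> sc c * z = z * sc c" unfolding k_algebra_def by blast
lemma sc_0: "k_algebra sc \<Longrightarrow> sc 0 = 0"
  using sc_add[of sc 0 0] by simp
lemma sc_neg: "k_algebra sc \<Longrightarrow> sc (- c) = - sc c"
proof -
  assume ka: "k_algebra sc"
  have "sc c + sc (-c) = 0" using sc_add[OF ka, of c "-c"] sc_0[OF ka] by simp
  then show ?thesis by (rule minus_unique[symmetric])
qed
lemma sc_diff: "k_algebra sc \<Longrightarrow> sc (c - d) = sc c - sc d"
  using sc_add[of sc c "-d"] sc_neg[of sc d] by simp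
lemma sc_pow: "k_algebra sc \<Longrightarrow> sc (c ^ s) = sc c ^ s"
  by (induction s) (simp_all add: sc_1 sc_mult)
lemma cenL: "k_algebra sc \<Longrightarrow> X * (sc c * Y) = sc c * (X * Y)"
proof -
  assume ka: "k_algebra sc"
  have "X * sc c = sc c * X" by (rule sc_cen[OF ka, symmetric])
  then show ?thesis by (simp only: mult.assoc[symmetric])
qed
lemma scsc: "k_algebra sc \<Longrightarrow> sc c * (sc d * Y) = sc (c * d) * Y"
  by (simp only: sc_mult mult.assoc)

lemma pow_comm:
  assumes ka: "k_algebra sc" and hz: "h * z = sc lam * z * h"
  shows "h^s * z = sc (lam^s) * z * h^s"
proof (induction s)
  case 0 then show ?case using ka by (simp add: sc_1)
next
  case (Suc s)
  have "h^Suc s * z = h^s * (h * z)" by (simp only: power_Suc2 mult.assoc)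
  also have "\<dots> = h^s * (sc lam * (z * h))" by (simp only: hz mult.assoc)
  also have "\<dots> = sc lam * (h^s * z * h)" by (simp only: cenL[OF ka] mult.assoc)
  also have "\<dots> = sc lam * (sc (lam^s) * (z * h^s * h))" by (simp only: Suc mult.assoc)
  also have "\<dots> = sc (lam^Suc s) * z * h^Suc s"
    by (simp only: scsc[OF ka] power_Suc power_Suc2 mult.assoc power_commutes)
  finally show ?case .
qed

lemma pow_comm':
  assumes ka: "k_algebra sc" and hz: "z * hinv = sc lam * hinv * z"
  shows "z * hinv^s = sc (lam^s) * hinv^s * z"
proof (induction s)
  case 0 then show ?case using ka by (simp add: sc_1)
next
  case (Suc s)
  have "z * hinv^Suc s = (z * hinv) * hinv^s" by (simp only: power_Suc mult.assoc)
  also have "\<dots> = sc lam * (hinv * (z * hinv^s))" by (simp only: hz mult.assoc)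
  also have "\<dots> = sc lam * (hinv * (sc (lam^s) * (hinv^s * z)))" by (simp only: Suc mult.assoc)
  also have "\<dots> = sc lam * (sc (lam^s) * (hinv * (hinv^s * z)))"
    by (simp only: cenL[OF ka, of hinv "lam^s"])
  also have "\<dots> = sc (lam^Suc s) * hinv^Suc s * z"
    by (simp only: scsc[OF ka] power_Suc mult.assoc)
  finally show ?case .
qed

lemma ad_term:
  fixes v :: "'k::field" and sc :: "'k \<Rightarrow> 'a::ring_1"
  assumes ka: "k_algebra sc" and hz: "h * z = sc lam * z * h" and zh: "z * hinv = sc lam * hinv * z"
    and sm: "s \<le> m"
  shows "z^(m-s) * h^s * (z * w - h * w * hinv * z) * hinv^s * z^s
     = sc (lam^s) * (z^(Suc m - s) * h^s * w * hinv^s * z^s)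
       - sc (lam^s) * (z^(Suc m - Suc s) * h^(Suc s) * w * hinv^(Suc s) * z^(Suc s))"
proof -
  have T1: "z^(m-s) * h^s * (z * w) * hinv^s * z^s = sc (lam^s) * (z^(Suc m - s) * h^s * w * hinv^s * z^s)"
  proof -
    have "z^(m-s) * h^s * (z * w) * hinv^s * z^s = z^(m-s) * (h^s * z) * w * hinv^s * z^s"
      by (simp only: mult.assoc)
    also have "\<dots> = z^(m-s) * (sc (lam^s) * (z * h^s)) * w * hinv^s * z^s"
      by (simp only: pow_comm[OF ka hz] mult.assoc)
    also have "\<dots> = sc (lam^s) * (z^(m-s) * z * h^s * w * hinv^s * z^s)"
      by (simp only: cenL[OF ka, of "z^(m-s)" "lam^s"] mult.assoc sc_cen[OF ka, of "lam^s"])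
    also have "z^(m-s) * z = z^(Suc m - s)" using sm by (simp add: Suc_diff_le power_Suc2 power_commutes)
    finally show ?thesis .
  qed
  have T2: "z^(m-s) * h^s * (h * w * hinv * z) * hinv^s * z^s
      = sc (lam^s) * (z^(Suc m - Suc s) * h^(Suc s) * w * hinv^(Suc s) * z^(Suc s))"
  proof -
    have "z^(m-s) * h^s * (h * w * hinv * z) * hinv^s * z^s
        = z^(m-s) * (h^s * h) * w * hinv * (z * hinv^s) * z^s"
      by (simp only: mult.assoc)
    also have "\<dots> = z^(m-s) * (h^s * h) * w * hinv * (sc (lam^s) * (hinv^s * z)) * z^s"
      by (simp only: pow_comm'[OF ka zh] mult.assoc)
    also have "\<dots> = sc (lam^s) * (z^(m-s) * (h^s * h) * w * hinv * (hinv^s * z) * z^s)"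
      by (simp only: cenL[OF ka, of "z^(m-s) * (h^s * h) * w * hinv" "lam^s"] mult.assoc sc_cen[OF ka, of "lam^s"])
    also have "\<dots> = sc (lam^s) * (z^(Suc m - Suc s) * h^(Suc s) * w * hinv^(Suc s) * z^(Suc s))"
      by (simp only: diff_Suc_Suc power_Suc2[of h s] power_Suc[of hinv s] power_Suc[of z s] mult.assoc)
    finally show ?thesis .
  qed
  show ?thesis
    by (simp only: right_diff_distrib left_diff_distrib T1 T2)
qed

lemma ad_iter:
  fixes v :: "'k::field" and sc :: "'k \<Rightarrow> 'a::ring_1"
  assumes ka: "k_algebra sc" and v: "v \<noteq> 0"
    and hz: "h * z = sc (v^2) * z * h" and zh: "z * hinv = sc (v^2) * hinv * z"
  shows "(ad_c h hinv z ^^ m) w = (\<Sum>s=0..m. sc (cc v m s) * (z^(m-s) * h^s * w * hinv^s * z^s))"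
proof (induction m arbitrary: w)
  case 0
  then show ?case using ka by (simp add: sc_1)
next
  case (Suc m)
  define lam where "lam = v^2"
  define P where "P s = z^(Suc m - s) * h^s * w * hinv^s * z^s" for s
  define f where "f s = sc (lam^s * cc v m s) * P s" for s
  define g where "g s = sc (lam^s * cc v m s) * P (Suc s)" for s
  have "(ad_c h hinv z ^^ Suc m) w = (ad_c h hinv z ^^ m) (z * w - h * w * hinv * z)"
    by (simp only: funpow_Suc_right o_apply ad_c_def)
  also have "\<dots> = (\<Sum>s=0..m. sc (cc v m s) * (z^(m-s) * h^s * (z * w - h * w * hinv * z) * hinv^s * z^s))"
    by (rule Suc.IH)
  also have "\<dots> = (\<Sum>s=0..m. f s - g s)"
  proof (rule sum.cong[OF refl])
    fix s assume "s \<in> {0..m}"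
    then have sm: "s \<le> m" by simp
    show "sc (cc v m s) * (z^(m-s) * h^s * (z * w - h * w * hinv * z) * hinv^s * z^s) = f s - g s"
      unfolding ad_term[OF ka hz[folded lam_def] zh[folded lam_def] sm] f_def g_def P_def
      by (simp only: right_diff_distrib scsc[OF ka] mult.commute[of "cc v m s"] diff_Suc_Suc)
  qed
  also have "\<dots> = (\<Sum>s=0..m. f s) - (\<Sum>s=0..m. g s)" by (rule sum_subtractf)
  also have "(\<Sum>s=0..m. f s) = P 0 + (\<Sum>s=0..m. f (Suc s))"
  proof -
    have "f (Suc m) = 0" unfolding f_def using ka by (simp add: cc_zero sc_0)
    then have "(\<Sum>s=0..m. f s) = (\<Sum>s=0..Suc m. f s)" by simp
    also have "\<dots> = f 0 + (\<Sum>s=0..m. f (Suc s))" using sum.atLeast0_atMost_Suc_shift[of f m] by (simp only: o_def)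
    also have "f 0 = P 0" unfolding f_def using ka by (simp add: sc_1)
    finally show ?thesis .
  qed
  also have "P 0 + (\<Sum>s=0..m. f (Suc s)) - (\<Sum>s=0..m. g s) = P 0 + (\<Sum>s=0..m. f (Suc s) - g s)"
    by (simp add: sum_subtractf)
  also have "(\<Sum>s=0..m. f (Suc s) - g s) = (\<Sum>s=0..m. sc (cc v (Suc m) (Suc s)) * P (Suc s))"
  proof (rule sum.cong[OF refl])
    fix s
    show "f (Suc s) - g s = sc (cc v (Suc m) (Suc s)) * P (Suc s)"
      unfolding f_def g_def cc_rec[OF v] lam_def using ka by (simp add: sc_diff left_diff_distrib)
  qed
  also have "P 0 + (\<Sum>s=0..m. sc (cc v (Suc m) (Suc s)) * P (Suc s))
     = (\<Sum>s=0..Suc m. sc (cc v (Suc m) s) * P s)"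
    using ka sum.atLeast0_atMost_Suc_shift[of "\<lambda>s. sc (cc v (Suc m) s) * P s" m] by (simp add: o_def sc_1)
  finally show ?case unfolding P_def .
qed

lemma conj_pow:
  assumes ka: "k_algebra sc" and hw: "h * w * hinv = sc mu * w"
  shows "h^s * w * hinv^s = sc (mu^s) * w"
proof (induction s)
  case 0 then show ?case using ka by (simp add: sc_1)
next
  case (Suc s)
  have "h^Suc s * w * hinv^Suc s = h^s * (h * w * hinv) * hinv^s"
    by (simp only: power_Suc2[of h s] power_Suc[of hinv s] mult.assoc)
  also have "\<dots> = h^s * (sc mu * w) * hinv^s" by (simp only: hw)
  also have "\<dots> = sc mu * (h^s * w * hinv^s)"
    by (simp only: mult.assoc cenL[OF ka, of "h^s" mu])
  also have "\<dots> = sc (mu^Suc s) * w"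
    by (simp only: Suc scsc[OF ka] power_Suc)
  finally show ?case .
qed

lemma serre_sum:
  fixes v :: "'k::field" and sc :: "'k \<Rightarrow> 'a::ring_1"
  assumes ka: "k_algebra sc" and v: "v \<noteq> 0"
    and hz: "h * z = sc (v^2) * z * h" and zh: "z * hinv = sc (v^2) * hinv * z"
    and hw: "h * w * hinv = sc mu * w"
  shows "(ad_c h hinv z ^^ m) w =
    (\<Sum>s=0..m. sc ((-1)^s * v^(s*(m-1)) * gauss_binom v m s * mu^s) * z^(m-s) * w * z^s)"
  unfolding ad_iter[OF ka v hz zh]
proof (rule sum.cong[OF refl])
  fix s
  have "sc (cc v m s) * (z^(m-s) * h^s * w * hinv^s * z^s) = sc (cc v m s) * (z^(m-s) * (sc (mu^s) * w) * z^s)"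
    by (simp only: conj_pow[OF ka hw, symmetric] mult.assoc)
  also have "\<dots> = sc (cc v m s) * (sc (mu^s) * (z^(m-s) * w * z^s))"
    by (simp only: cenL[OF ka, of "z^(m-s)" "mu^s"] mult.assoc)
  also have "\<dots> = sc ((-1)^s * v^(s*(m-1)) * gauss_binom v m s * mu^s) * z^(m-s) * w * z^s"
    by (simp only: scsc[OF ka] cc_def mult.assoc)
  finally show "sc (cc v m s) * (z^(m-s) * h^s * w * hinv^s * z^s) =
     sc ((-1)^s * v^(s*(m-1)) * gauss_binom v m s * mu^s) * z^(m-s) * w * z^s" .
qed



lemma gi_add: "group_into \<gamma> \<Longrightarrow> \<gamma> (g + h) = \<gamma> g * \<gamma> h" unfolding group_into_def by blast
lemma gi_0: "group_into \<gamma> \<Longrightarrow> \<gamma> 0 = 1" unfolding group_into_def by blast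
lemma gi_inv: "group_into \<gamma> \<Longrightarrow> \<gamma> g * \<gamma> (- g) = 1"
  using gi_add[of \<gamma> g "-g"] gi_0[of \<gamma>] by simp
lemma gi_inv': "group_into \<gamma> \<Longrightarrow> \<gamma> (- g) * \<gamma> g = 1"
  using gi_add[of \<gamma> "-g" g] gi_0[of \<gamma>] by simp
lemma gi_comm: "group_into \<gamma> \<Longrightarrow> \<gamma> g * \<gamma> h = \<gamma> h * \<gamma> g"
  using gi_add[of \<gamma> g h] gi_add[of \<gamma> h g] by (simp add: add.commute)

lemma ch_add: "is_character c \<Longrightarrow> c (g + h) = c g * c h" unfolding is_character_def by blast
lemma ch_inv: "is_character c \<Longrightarrow> c g * c (- g) = 1"
  using ch_add[of c g "-g"] unfolding is_character_def by simp
lemma ch_nz: "is_character c \<Longrightarrow> c g \<noteq> 0"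
  using ch_inv[of c g] by auto
lemma ch_neg: "is_character c \<Longrightarrow> c (- g) = inverse (c g)"
  using ch_inv[of c g] ch_nz[of c g] by (simp add: field_simps)

lemma conj_comm:
  assumes gi: "group_into \<gamma>" and h: "\<gamma> g * u * \<gamma> (- g) = sc c * u"
  shows "\<gamma> g * u = sc c * u * \<gamma> g"
proof -
  have "\<gamma> g * u = \<gamma> g * u * (\<gamma> (- g) * \<gamma> g)" using gi_inv'[OF gi, of g] by simp
  also have "\<dots> = sc c * u * \<gamma> g" by (simp only: h mult.assoc[symmetric])
  finally show ?thesis .
qed

lemma conj_comm':
  assumes gi: "group_into \<gamma>" and ka: "k_algebra sc" and h: "\<gamma> g * u * \<gamma> (- g) = sc c * u"
  shows "u * \<gamma> (- g) = sc c * \<gamma> (- g) * u"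
proof -
  have "u * \<gamma> (- g) = (\<gamma> (- g) * \<gamma> g) * u * \<gamma> (- g)" using gi_inv'[OF gi, of g] by simp
  also have "\<dots> = \<gamma> (- g) * (sc c * u)" by (simp only: h[symmetric] mult.assoc)
  also have "\<dots> = sc c * \<gamma> (- g) * u" by (simp only: cenL[OF ka] mult.assoc)
  finally show ?thesis .
qed

lemma ad_scal:
  assumes ka: "k_algebra sc"
  shows "ad_c h hinv z (sc c * u) = sc c * ad_c h hinv z u"
proof -
  have "ad_c h hinv z (sc c * u) = z * (sc c * u) - h * (sc c * u) * hinv * z" by (simp add: ad_c_def)
  also have "\<dots> = sc c * (z * u) - sc c * (h * u * hinv * z)"
    by (simp only: cenL[OF ka] mult.assoc)
  also have "\<dots> = sc c * ad_c h hinv z u" by (simp add: ad_c_def right_diff_distrib)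
  finally show ?thesis .
qed

lemma adx_step:
  fixes sc :: "'k::field \<Rightarrow> 'a::ring_1" and \<gamma> :: "'g::ab_group_add \<Rightarrow> 'a"
  assumes ka: "k_algebra sc" and gi: "group_into \<gamma>"
    and xF: "xi = Fi * \<gamma> Li"
    and hwL: "\<gamma> Li * W * \<gamma> (- Li) = sc a * W"
    and hwK: "\<gamma> Ki * W * \<gamma> (- Ki) = sc b * W"
    and hF: "\<And>g. \<gamma> g * Fi * \<gamma> (- g) = sc (inverse (ch g)) * Fi"
    and chc: "is_character ch"
    and hb: "b = inverse (ch G)"
  shows "ad_c (\<gamma> Li) (\<gamma> (- Li)) xi (W * \<gamma> G) = sc a * ad_c (\<gamma> Ki) (\<gamma> (- Ki)) Fi W * \<gamma> (G + Li)"
proof -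
  have cW: "\<gamma> Li * W = sc a * W * \<gamma> Li" by (rule conj_comm[where sc=sc, OF gi hwL])
  have gGL: "\<gamma> (G + Li) = \<gamma> Li * \<gamma> G" using gi_add[OF gi, of G Li] gi_comm[OF gi, of G Li] by simp
  have T1: "xi * (W * \<gamma> G) = sc a * (Fi * W * \<gamma> (G + Li))"
  proof -
    have "xi * (W * \<gamma> G) = Fi * (\<gamma> Li * W) * \<gamma> G" by (simp only: xF mult.assoc)
    also have "\<dots> = Fi * (sc a * (W * \<gamma> Li)) * \<gamma> G" by (simp only: cW mult.assoc)
    also have "\<dots> = sc a * (Fi * W * (\<gamma> Li * \<gamma> G))" by (simp only: cenL[OF ka, of Fi a] mult.assoc)
    finally show ?thesis by (simp only: gGL)
  qed
  define H where "H = G + - Li"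
  have cF: "\<gamma> H * Fi = sc (inverse (ch H)) * Fi * \<gamma> H" by (rule conj_comm[where sc=sc, OF gi hF])
  have cFL: "\<gamma> Li * Fi = sc (inverse (ch Li)) * Fi * \<gamma> Li" by (rule conj_comm[where sc=sc, OF gi hF])
  have gH: "\<gamma> G * \<gamma> (- Li) = \<gamma> H" unfolding H_def by (rule gi_add[OF gi, symmetric])
  have gHL: "\<gamma> H * \<gamma> Li = \<gamma> G" unfolding H_def using gi_add[OF gi, of "G + - Li" Li] by simp
  have coef: "inverse (ch H) * a * inverse (ch Li) = a * b"
    unfolding H_def hb ch_add[OF chc] ch_neg[OF chc] by (simp add: field_simps ch_nz[OF chc])
  have T2: "\<gamma> Li * (W * \<gamma> G) * \<gamma> (- Li) * xi = sc (a * b) * (W * Fi * \<gamma> (G + Li))"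
  proof -
    have "\<gamma> Li * (W * \<gamma> G) * \<gamma> (- Li) * xi = \<gamma> Li * W * (\<gamma> G * \<gamma> (- Li)) * Fi * \<gamma> Li"
      by (simp only: xF mult.assoc)
    also have "\<dots> = \<gamma> Li * W * (\<gamma> H * Fi) * \<gamma> Li" by (simp only: gH mult.assoc)
    also have "\<dots> = \<gamma> Li * W * (sc (inverse (ch H)) * (Fi * (\<gamma> H * \<gamma> Li)))" by (simp only: cF mult.assoc)
    also have "\<dots> = sc (inverse (ch H)) * ((\<gamma> Li * W) * Fi * \<gamma> G)"
      by (simp only: gHL mult.assoc cenL[OF ka, of W "inverse (ch H)"] cenL[OF ka, of "\<gamma> Li" "inverse (ch H)"])
    also have "\<dots> = sc (inverse (ch H)) * (sc a * (W * (\<gamma> Li * Fi) * \<gamma> G))"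
      by (simp only: cW mult.assoc)
    also have "\<dots> = sc (inverse (ch H)) * (sc a * (W * (sc (inverse (ch Li)) * (Fi * (\<gamma> Li * \<gamma> G)))))"
      by (simp only: cFL mult.assoc)
    also have "\<dots> = sc (inverse (ch H)) * (sc a * (sc (inverse (ch Li)) * (W * Fi * (\<gamma> Li * \<gamma> G))))"
      by (simp only: cenL[OF ka, of W "inverse (ch Li)"] mult.assoc)
    also have "\<dots> = sc (inverse (ch H) * a * inverse (ch Li)) * (W * Fi * \<gamma> (G + Li))"
      by (simp only: scsc[OF ka] gGL mult.assoc)
    finally show ?thesis unfolding coef .
  qed
  have R: "ad_c (\<gamma> Ki) (\<gamma> (- Ki)) Fi W = Fi * W - sc b * W * Fi"
    unfolding ad_c_def by (simp only: hwK)
  show ?thesis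
    unfolding ad_c_def[of "\<gamma> Li"] T1 T2 R
    by (simp only: left_diff_distrib right_diff_distrib scsc[OF ka] mult.assoc)
qed

lemma hom_step:
  assumes ka: "k_algebra sc"
    and hW: "\<gamma> g * W * \<gamma> (- g) = sc p * W" and hF: "\<gamma> g * Fi * \<gamma> (- g) = sc f * Fi"
    and gi: "group_into \<gamma>"
  shows "\<gamma> g * (Fi * W - sc b * W * Fi) * \<gamma> (- g) = sc (f * p) * (Fi * W - sc b * W * Fi)"
proof -
  have i: "\<gamma> (- g) * \<gamma> g = 1" by (rule gi_inv'[OF gi])
  have "(\<gamma> g * Fi * \<gamma> (- g)) * (\<gamma> g * W * \<gamma> (- g)) = \<gamma> g * Fi * (\<gamma> (- g) * \<gamma> g) * W * \<gamma> (- g)"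
    by (simp only: mult.assoc)
  also have "\<dots> = \<gamma> g * (Fi * W) * \<gamma> (- g)" by (simp only: i mult_1_right mult.assoc)
  finally have "\<gamma> g * (Fi * W) * \<gamma> (- g) = (\<gamma> g * Fi * \<gamma> (- g)) * (\<gamma> g * W * \<gamma> (- g))" by simp
  also have "\<dots> = sc (f * p) * (Fi * W)"
    unfolding hF hW by (simp only: cenL[OF ka, of Fi p] mult.assoc scsc[OF ka])
  finally have A: "\<gamma> g * (Fi * W) * \<gamma> (- g) = sc (f * p) * (Fi * W)" .
  have "sc b * ((\<gamma> g * W * \<gamma> (- g)) * (\<gamma> g * Fi * \<gamma> (- g))) = sc b * (\<gamma> g * W * (\<gamma> (- g) * \<gamma> g) * Fi * \<gamma> (- g))"
    by (simp only: mult.assoc)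
  also have "\<dots> = \<gamma> g * (sc b * W * Fi) * \<gamma> (- g)" by (simp only: i mult_1_right mult.assoc cenL[OF ka, of "\<gamma> g" b])
  finally have "\<gamma> g * (sc b * W * Fi) * \<gamma> (- g) = sc b * ((\<gamma> g * W * \<gamma> (- g)) * (\<gamma> g * Fi * \<gamma> (- g)))" by simp
  also have "\<dots> = sc (f * p) * (sc b * W * Fi)"
    unfolding hF hW by (simp only: cenL[OF ka, of W f] mult.assoc scsc[OF ka] mult.commute[of b] mult.commute[of p f])
  finally have B: "\<gamma> g * (sc b * W * Fi) * \<gamma> (- g) = sc (f * p) * (sc b * W * Fi)" .
  show ?thesis using A B by (simp only: left_diff_distrib right_diff_distrib)
qed

lemma ch_iter: "is_character ch \<Longrightarrow> ch (((\<lambda>g. g + L) ^^ k) M) = ch M * ch L ^ k"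
proof (induction k)
  case 0 then show ?case by simp
next
  case (Suc k)
  assume c: "is_character ch"
  have "ch (((\<lambda>g. g + L) ^^ Suc k) M) = ch (((\<lambda>g. g + L) ^^ k) M + L)" by simp
  also have "\<dots> = ch (((\<lambda>g. g + L) ^^ k) M) * ch L" by (rule ch_add[OF c])
  also have "\<dots> = ch M * ch L ^ Suc k" using Suc c by (simp add: mult.assoc power_Suc2)
  finally show ?case .
qed

lemma conv:
  fixes sc :: "'k::field \<Rightarrow> 'a::ring_1" and \<gamma> :: "'g::ab_group_add \<Rightarrow> 'a"
  assumes ka: "k_algebra sc" and gi: "group_into \<gamma>"
    and chi: "is_character chi" and chj: "is_character chj"
    and cFi: "\<And>g. \<gamma> g * Fi * \<gamma> (- g) = sc (inverse (chi g)) * Fi"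
    and cFj: "\<And>g. \<gamma> g * Fj * \<gamma> (- g) = sc (inverse (chj g)) * Fj"
    and xFi: "xi = Fi * \<gamma> Li" and xFj: "xj = Fj * \<gamma> Lj"
    and Li: "chi Li = chi Ki" and Lj: "chi Lj = chj Ki"
  shows "\<exists>c. c \<noteq> 0 \<and> (ad_c (\<gamma> Li) (\<gamma> (- Li)) xi ^^ k) xj
        = sc c * (ad_c (\<gamma> Ki) (\<gamma> (- Ki)) Fi ^^ k) Fj * \<gamma> (((\<lambda>g. g + Li) ^^ k) Lj)
     \<and> (\<forall>g. \<gamma> g * (ad_c (\<gamma> Ki) (\<gamma> (- Ki)) Fi ^^ k) Fj * \<gamma> (- g)
           = sc (inverse (chi g) ^ k * inverse (chj g)) * (ad_c (\<gamma> Ki) (\<gamma> (- Ki)) Fi ^^ k) Fj)"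
proof (induction k)
  case 0
  show ?case
    by (rule exI[of _ 1]) (simp add: sc_1[OF ka] xFj cFj)
next
  case (Suc k)
  define adx where "adx = ad_c (\<gamma> Li) (\<gamma> (- Li)) xi"
  define adF where "adF = ad_c (\<gamma> Ki) (\<gamma> (- Ki)) Fi"
  define W where "W = (adF ^^ k) Fj"
  define G where "G = ((\<lambda>g. g + Li) ^^ k) Lj"
  from Suc.IH obtain c where c0: "c \<noteq> 0" and cx: "(adx ^^ k) xj = sc c * W * \<gamma> G"
    and hom: "\<And>g. \<gamma> g * W * \<gamma> (- g) = sc (inverse (chi g) ^ k * inverse (chj g)) * W"
    unfolding adx_def adF_def W_def G_def by blast
  define a where "a = inverse (chi Li) ^ k * inverse (chj Li)"
  define b where "b = inverse (chi Ki) ^ k * inverse (chj Ki)"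
  have hb: "b = inverse (chi G)"
    unfolding b_def G_def ch_iter[OF chi] Lj Li by (simp add: power_inverse mult.commute)
  have a0: "a \<noteq> 0" unfolding a_def using ch_nz[OF chi] ch_nz[OF chj] by simp
  have st: "adx (W * \<gamma> G) = sc a * adF W * \<gamma> (G + Li)"
    unfolding adx_def adF_def
    by (rule adx_step[OF ka gi xFi hom[of Li, folded a_def] hom[of Ki, folded b_def] cFi chi hb])
  have "(adx ^^ Suc k) xj = adx (sc c * (W * \<gamma> G))" by (simp add: cx mult.assoc)
  also have "\<dots> = sc c * adx (W * \<gamma> G)" unfolding adx_def by (rule ad_scal[OF ka])
  also have "\<dots> = sc (c * a) * adF W * \<gamma> (G + Li)" unfolding st by (simp add: scsc[OF ka] mult.assoc)
  finally have A: "(adx ^^ Suc k) xj = sc (c * a) * (adF ^^ Suc k) Fj * \<gamma> (((\<lambda>g. g + Li) ^^ Suc k) Lj)"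
    by (simp add: W_def G_def)
  have R: "adF W = Fi * W - sc b * W * Fi"
    unfolding adF_def ad_c_def by (simp only: hom[of Ki, folded b_def])
  have B: "\<gamma> g * (adF ^^ Suc k) Fj * \<gamma> (- g) = sc (inverse (chi g) ^ Suc k * inverse (chj g)) * (adF ^^ Suc k) Fj" for g
  proof -
    have "\<gamma> g * (adF ^^ Suc k) Fj * \<gamma> (- g) = \<gamma> g * (Fi * W - sc b * W * Fi) * \<gamma> (- g)"
      by (simp add: W_def[symmetric] R)
    also have "\<dots> = sc (inverse (chi g) * (inverse (chi g) ^ k * inverse (chj g))) * (Fi * W - sc b * W * Fi)"
      by (rule hom_step[OF ka hom cFi gi])
    also have "\<dots> = sc (inverse (chi g) ^ Suc k * inverse (chj g)) * (adF ^^ Suc k) Fj"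
      by (simp add: W_def[symmetric] R mult.assoc)
    finally show ?thesis .
  qed
  show ?case
  proof (intro exI conjI allI)
    show "c * a \<noteq> 0" using c0 a0 by simp
    show "(ad_c (\<gamma> Li) (\<gamma> (- Li)) xi ^^ Suc k) xj =
      sc (c * a) * (ad_c (\<gamma> Ki) (\<gamma> (- Ki)) Fi ^^ Suc k) Fj * \<gamma> (((\<lambda>g. g + Li) ^^ Suc k) Lj)"
      using A unfolding adx_def adF_def .
    fix g
    show "\<gamma> g * (ad_c (\<gamma> Ki) (\<gamma> (- Ki)) Fi ^^ Suc k) Fj * \<gamma> (- g) =
       sc (inverse (chi g) ^ Suc k * inverse (chj g)) * (ad_c (\<gamma> Ki) (\<gamma> (- Ki)) Fi ^^ Suc k) Fj"
      using B unfolding adF_def .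
  qed
qed

theorem lemma3p13:
  fixes n :: nat and L K :: "nat \<Rightarrow> 'g::ab_group_add" and \<chi> :: "nat \<Rightarrow> 'g \<Rightarrow> 'k::field_char_0"
    and a :: "nat \<Rightarrow> nat \<Rightarrow> int" and l :: "nat \<Rightarrow> 'k"
    and d :: "nat \<Rightarrow> nat" and qc :: "nat \<Rightarrow> 'k"
    and sc :: "'k \<Rightarrow> 'a::ring_1" and \<gamma> :: "'g \<Rightarrow> 'a" and x y :: "nat \<Rightarrow> 'a"
  assumes "alg_closed TYPE('k)"
    and "reduced_datum n L K \<chi> a"
    and "\<forall>i<n. l i \<noteq> 0"
    and "\<forall>i<n. d i \<in> {1, 2, 3}"
    and "\<forall>i<n. \<forall>j<n. same_component n a i j \<longrightarrow> qc i = qc j"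
    and "\<forall>i<n. qpar K \<chi> i i = qc i ^ (2 * d i)"
    and "\<forall>i<n. \<forall>j<n. same_component n a i j \<longrightarrow> int (d i) * a i j = int (d j) * a j i"
    and "smash_relations n \<chi> sc \<gamma> x y"
  defines "E \<equiv> y" and "F \<equiv> (\<lambda>i. x i * \<gamma> (- L i))"
  shows "(U_relations n L K \<chi> a l sc \<gamma> x y \<longleftrightarrow> new_relations n L K \<chi> a l d qc sc \<gamma> E F)
    \<and> (\<forall>i<n. \<forall>g. \<gamma> g * E i * \<gamma> (- g) = sc (\<chi> i g) * E i
               \<and> \<gamma> g * F i * \<gamma> (- g) = sc (inverse (\<chi> i g)) * F i)
    \<and> (\<forall>(scB :: 'k \<Rightarrow> 'b::ring_1) \<iota>1 \<iota>2 \<Delta>.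
         k_algebra scB \<and> k_alg_hom sc scB \<iota>1 \<and> k_alg_hom sc scB \<iota>2
         \<and> (\<forall>u v. \<iota>1 u * \<iota>2 v = \<iota>2 v * \<iota>1 u)
         \<and> k_alg_hom sc scB \<Delta>
         \<and> (\<forall>g. \<Delta> (\<gamma> g) = \<iota>1 (\<gamma> g) * \<iota>2 (\<gamma> g))
         \<and> (\<forall>i<n. \<Delta> (x i) = \<iota>1 (\<gamma> (L i)) * \<iota>2 (x i) + \<iota>1 (x i)
                 \<and> \<Delta> (y i) = \<iota>1 (\<gamma> (K i)) * \<iota>2 (y i) + \<iota>1 (y i))
         \<longrightarrow> (\<forall>i<n. \<Delta> (E i) = \<iota>1 (\<gamma> (K i)) * \<iota>2 (E i) + \<iota>1 (E i)
                 \<and> \<Delta> (F i) = \<iota>2 (F i) + \<iota>1 (F i) * \<iota>2 (\<gamma> (- L i))))"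
proof -
  note rd = assms(2) and qii = assms(6) and smr = assms(8)
  have ka: "k_algebra sc" and gi: "group_into \<gamma>"
    using smr unfolding smash_relations_def by blast+
  have cx: "\<And>i g. i < n \<Longrightarrow> \<gamma> g * x i * \<gamma> (- g) = sc (inverse (\<chi> i g)) * x i"
    using smr unfolding smash_relations_def by blast
  have cy: "\<And>i g. i < n \<Longrightarrow> \<gamma> g * y i * \<gamma> (- g) = sc (\<chi> i g) * y i"
    using smr unfolding smash_relations_def by blast
  have chr: "\<And>i. i < n \<Longrightarrow> is_character (\<chi> i)"
    using rd unfolding reduced_datum_def by blast
  have dat: "\<And>i j. i < n \<Longrightarrow> j < n \<Longrightarrow> \<chi> i (L j) = \<chi> j (K i)"
    using rd unfolding reduced_datum_def by blast
  have gc: "gen_cartan n a"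
    using rd unfolding reduced_datum_def cartan_finite_type_def by blast
  have aneg: "\<And>i j. i < n \<Longrightarrow> j < n \<Longrightarrow> i \<noteq> j \<Longrightarrow> a i j \<le> 0"
    using gc unfolding gen_cartan_def by blast
  have cF: "\<And>i g. i < n \<Longrightarrow> \<gamma> g * F i * \<gamma> (- g) = sc (inverse (\<chi> i g)) * F i"
  proof -
    fix i g assume i: "i < n"
    have "\<gamma> g * F i * \<gamma> (- g) = \<gamma> g * x i * (\<gamma> (- L i) * \<gamma> (- g))"
      by (simp only: F_def mult.assoc)
    also have "\<dots> = (\<gamma> g * x i * \<gamma> (- g)) * \<gamma> (- L i)"
      by (simp only: gi_comm[OF gi, of "- L i" "- g"] mult.assoc)
    also have "\<dots> = sc (inverse (\<chi> i g)) * F i" unfolding cx[OF i] F_def by (simp only: mult.assoc)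
    finally show "\<gamma> g * F i * \<gamma> (- g) = sc (inverse (\<chi> i g)) * F i" .
  qed
  have xF: "\<And>i. x i = F i * \<gamma> (L i)"
    by (simp add: F_def mult.assoc gi_inv'[OF gi])
  have PART2: "\<forall>i<n. \<forall>g. \<gamma> g * E i * \<gamma> (- g) = sc (\<chi> i g) * E i
               \<and> \<gamma> g * F i * \<gamma> (- g) = sc (inverse (\<chi> i g)) * F i"
    using cy cF unfolding E_def by blast
  have PART3: "\<forall>(scB :: 'k \<Rightarrow> 'b::ring_1) \<iota>1 \<iota>2 \<Delta>.
         k_algebra scB \<and> k_alg_hom sc scB \<iota>1 \<and> k_alg_hom sc scB \<iota>2
         \<and> (\<forall>u v. \<iota>1 u * \<iota>2 v = \<iota>2 v * \<iota>1 u)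
         \<and> k_alg_hom sc scB \<Delta>
         \<and> (\<forall>g. \<Delta> (\<gamma> g) = \<iota>1 (\<gamma> g) * \<iota>2 (\<gamma> g))
         \<and> (\<forall>i<n. \<Delta> (x i) = \<iota>1 (\<gamma> (L i)) * \<iota>2 (x i) + \<iota>1 (x i)
                 \<and> \<Delta> (y i) = \<iota>1 (\<gamma> (K i)) * \<iota>2 (y i) + \<iota>1 (y i))
         \<longrightarrow> (\<forall>i<n. \<Delta> (E i) = \<iota>1 (\<gamma> (K i)) * \<iota>2 (E i) + \<iota>1 (E i)
                 \<and> \<Delta> (F i) = \<iota>2 (F i) + \<iota>1 (F i) * \<iota>2 (\<gamma> (- L i)))"
  proof (intro allI, rule impI)
    fix scB :: "'k \<Rightarrow> 'b::ring_1" and \<iota>1 \<iota>2 \<Delta>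
    assume H: "k_algebra scB \<and> k_alg_hom sc scB \<iota>1 \<and> k_alg_hom sc scB \<iota>2
         \<and> (\<forall>u v. \<iota>1 u * \<iota>2 v = \<iota>2 v * \<iota>1 u)
         \<and> k_alg_hom sc scB \<Delta>
         \<and> (\<forall>g. \<Delta> (\<gamma> g) = \<iota>1 (\<gamma> g) * \<iota>2 (\<gamma> g))
         \<and> (\<forall>i<n. \<Delta> (x i) = \<iota>1 (\<gamma> (L i)) * \<iota>2 (x i) + \<iota>1 (x i)
                 \<and> \<Delta> (y i) = \<iota>1 (\<gamma> (K i)) * \<iota>2 (y i) + \<iota>1 (y i))"
    have m1: "\<And>u v. \<iota>1 (u * v) = \<iota>1 u * \<iota>1 v" and o1: "\<iota>1 1 = 1"
      using H unfolding k_alg_hom_def by blast+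
    have m2: "\<And>u v. \<iota>2 (u * v) = \<iota>2 u * \<iota>2 v" and o2: "\<iota>2 1 = 1"
      using H unfolding k_alg_hom_def by blast+
    have mD: "\<And>u v. \<Delta> (u * v) = \<Delta> u * \<Delta> v"
      using H unfolding k_alg_hom_def by blast
    have cm: "\<And>u v. \<iota>1 u * \<iota>2 v = \<iota>2 v * \<iota>1 u" using H by blast
    have Dg: "\<And>g. \<Delta> (\<gamma> g) = \<iota>1 (\<gamma> g) * \<iota>2 (\<gamma> g)" using H by blast
    show "\<forall>i<n. \<Delta> (E i) = \<iota>1 (\<gamma> (K i)) * \<iota>2 (E i) + \<iota>1 (E i)
                 \<and> \<Delta> (F i) = \<iota>2 (F i) + \<iota>1 (F i) * \<iota>2 (\<gamma> (- L i))"
    proof (intro allI impI conjI)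
      fix i assume i: "i < n"
      show "\<Delta> (E i) = \<iota>1 (\<gamma> (K i)) * \<iota>2 (E i) + \<iota>1 (E i)" using H i unfolding E_def by blast
      have Dx: "\<Delta> (x i) = \<iota>1 (\<gamma> (L i)) * \<iota>2 (x i) + \<iota>1 (x i)" using H i by blast
      have "\<Delta> (F i) = (\<iota>1 (\<gamma> (L i)) * \<iota>2 (x i) + \<iota>1 (x i)) * (\<iota>1 (\<gamma> (- L i)) * \<iota>2 (\<gamma> (- L i)))"
        unfolding F_def mD Dx Dg ..
      also have "\<dots> = \<iota>1 (\<gamma> (L i)) * (\<iota>2 (x i) * \<iota>1 (\<gamma> (- L i))) * \<iota>2 (\<gamma> (- L i))
          + \<iota>1 (x i) * \<iota>1 (\<gamma> (- L i)) * \<iota>2 (\<gamma> (- L i))"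
        by (simp only: distrib_right mult.assoc)
      also have "\<dots> = \<iota>1 (\<gamma> (L i) * \<gamma> (- L i)) * \<iota>2 (x i * \<gamma> (- L i))
          + \<iota>1 (x i * \<gamma> (- L i)) * \<iota>2 (\<gamma> (- L i))"
        by (simp only: cm[symmetric] m1 m2 mult.assoc)
      also have "\<dots> = \<iota>2 (F i) + \<iota>1 (F i) * \<iota>2 (\<gamma> (- L i))"
        by (simp add: gi_inv[OF gi] o1 F_def)
      finally show "\<Delta> (F i) = \<iota>2 (F i) + \<iota>1 (F i) * \<iota>2 (\<gamma> (- L i))" .
    qed
  qed
  have v2: "\<And>i. i < n \<Longrightarrow> (qc i ^ d i)^2 = \<chi> i (K i)"
  proof -
    fix i assume i: "i < n"
    have "(qc i ^ d i)^2 = qc i ^ (2 * d i)" by (simp add: power_mult[symmetric] mult.commute)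
    also have "\<dots> = \<chi> i (K i)" using qii i by (simp add: qpar_def)
    finally show "(qc i ^ d i)^2 = \<chi> i (K i)" .
  qed
  have vnz: "\<And>i. i < n \<Longrightarrow> qc i ^ d i \<noteq> 0"
  proof
    fix i assume i: "i < n" and z: "qc i ^ d i = 0"
    have "\<chi> i (K i) = 0" using v2[OF i] z by simp
    then show False using ch_nz[OF chr[OF i]] by blast
  qed
  have pE: "\<And>i j. i < n \<Longrightarrow> j < n \<Longrightarrow> i \<noteq> j \<Longrightarrow>
      pcoef n a K \<chi> d qc i j = qpar K \<chi> i j * (qc i ^ d i)^(nat (1 - a i j) - 1)"
  proof -
    fix i j assume i: "i < n" and j: "j < n" and ij: "i \<noteq> j"
    have an: "a i j \<le> 0" by (rule aneg[OF i j ij])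
    show "pcoef n a K \<chi> d qc i j = qpar K \<chi> i j * (qc i ^ d i)^(nat (1 - a i j) - 1)"
    proof (cases "same_component n a i j")
      case True
      have e1: "nat (1 - a i j) - 1 = nat (- a i j)" using an by simp
      have e2: "- (int (d i) * a i j) = int (d i * nat (- a i j))" using an by simp
      have "qc i powi (- (int (d i) * a i j)) = (qc i ^ d i)^(nat (1 - a i j) - 1)"
        unfolding e1 e2 power_int_of_nat by (simp add: power_mult)
      then show ?thesis using True by (simp add: pcoef_def)
    next
      case False
      have "a i j = 0"
      proof (rule ccontr)
        assume "a i j \<noteq> 0"
        then have "dynkin_adj n a i j" using i j ij by (simp add: dynkin_adj_def)
        then have "same_component n a i j" unfolding same_component_def by (rule r_into_rtranclp)
        then show False using False by blast
      qed
      then show ?thesis using False by (simp add: pcoef_def)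
    qed
  qed
  have SEq: "\<And>i j. i < n \<Longrightarrow> j < n \<Longrightarrow> i \<noteq> j \<Longrightarrow>
      (ad_c (\<gamma> (K i)) (\<gamma> (- K i)) (y i) ^^ nat (1 - a i j)) (y j) =
      (\<Sum>s = 0..nat (1 - a i j).
            sc ((- pcoef n a K \<chi> d qc i j) ^ s * gauss_binom (qc i ^ d i) (nat (1 - a i j)) s)
              * E i ^ (nat (1 - a i j) - s) * E j * E i ^ s)"
  proof -
    fix i j assume i: "i < n" and j: "j < n" and ij: "i \<noteq> j"
    define v where "v = qc i ^ d i"
    define m where "m = nat (1 - a i j)"
    define q where "q = qpar K \<chi> i j"
    have hz: "\<gamma> (K i) * y i = sc (v^2) * y i * \<gamma> (K i)"
      unfolding v_def v2[OF i] by (rule conj_comm[where sc=sc, OF gi cy[OF i]])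
    have zh: "y i * \<gamma> (- K i) = sc (v^2) * \<gamma> (- K i) * y i"
      unfolding v_def v2[OF i] by (rule conj_comm'[where sc=sc, OF gi ka cy[OF i]])
    have hw: "\<gamma> (K i) * y j * \<gamma> (- K i) = sc q * y j"
      unfolding q_def qpar_def by (rule cy[OF j])
    have "(ad_c (\<gamma> (K i)) (\<gamma> (- K i)) (y i) ^^ m) (y j) =
      (\<Sum>s=0..m. sc ((-1)^s * v^(s*(m-1)) * gauss_binom v m s * q^s) * y i^(m-s) * y j * y i^s)"
      by (rule serre_sum[OF ka vnz[OF i, folded v_def] hz zh hw])
    also have "\<dots> = (\<Sum>s = 0..m. sc ((- pcoef n a K \<chi> d qc i j) ^ s * gauss_binom v m s)
              * E i ^ (m - s) * E j * E i ^ s)"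
    proof (rule sum.cong[OF refl])
      fix s
      have "(-1)^s * v^(s*(m-1)) * gauss_binom v m s * q^s = (- pcoef n a K \<chi> d qc i j) ^ s * gauss_binom v m s"
      proof -
        have c1: "(v^(m-1))^s = v^(s*(m-1))" by (simp only: power_mult[symmetric] mult.commute)
        have c2: "(- (q * v^(m-1)))^s = (-1)^s * (q^s * v^(s*(m-1)))"
          using power_minus[of "q * v^(m-1)" s] by (simp only: power_mult_distrib c1)
        show ?thesis by (simp only: pE[OF i j ij, folded v_def m_def q_def] c2 mult_ac)
      qed
      then show "sc ((-1)^s * v^(s*(m-1)) * gauss_binom v m s * q^s) * y i^(m-s) * y j * y i^s =
          sc ((- pcoef n a K \<chi> d qc i j) ^ s * gauss_binom v m s) * E i ^ (m - s) * E j * E i ^ s"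
        unfolding E_def by (simp only:)
    qed
    finally show "?thesis i j" unfolding m_def v_def .
  qed
  have SFq: "\<And>i j. i < n \<Longrightarrow> j < n \<Longrightarrow> i \<noteq> j \<Longrightarrow>
      ((ad_c (\<gamma> (L i)) (\<gamma> (- L i)) (x i) ^^ nat (1 - a i j)) (x j) = 0) =
      ((\<Sum>s = 0..nat (1 - a i j).
            sc ((- inverse (pcoef n a K \<chi> d qc i j)) ^ s * gauss_binom (qc i ^ d i) (nat (1 - a i j)) s)
              * F i ^ (nat (1 - a i j) - s) * F j * F i ^ s) = 0)"
  proof -
    fix i j assume i: "i < n" and j: "j < n" and ij: "i \<noteq> j"
    define v where "v = qc i ^ d i"
    define m where "m = nat (1 - a i j)"
    define q where "q = qpar K \<chi> i j"
    define v' where "v' = inverse v"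
    define adF where "adF = ad_c (\<gamma> (K i)) (\<gamma> (- K i)) (F i)"
    have vnz': "v \<noteq> 0" unfolding v_def by (rule vnz[OF i])
    have v'nz: "v' \<noteq> 0" unfolding v'_def using vnz' by simp
    have v'2: "v'^2 = inverse (\<chi> i (K i))" unfolding v'_def v_def power_inverse v2[OF i] ..
    have hz: "\<gamma> (K i) * F i = sc (v'^2) * F i * \<gamma> (K i)"
      unfolding v'2 by (rule conj_comm[where sc=sc, OF gi cF[OF i]])
    have zh: "F i * \<gamma> (- K i) = sc (v'^2) * \<gamma> (- K i) * F i"
      unfolding v'2 by (rule conj_comm'[where sc=sc, OF gi ka cF[OF i]])
    have hw: "\<gamma> (K i) * F j * \<gamma> (- K i) = sc (inverse q) * F j"
      unfolding q_def qpar_def by (rule cF[OF j])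
    have "(adF ^^ m) (F j) =
      (\<Sum>s=0..m. sc ((-1)^s * v'^(s*(m-1)) * gauss_binom v' m s * (inverse q)^s) * F i^(m-s) * F j * F i^s)"
      unfolding adF_def by (rule serre_sum[OF ka v'nz hz zh hw])
    also have "\<dots> = (\<Sum>s = 0..m. sc ((- inverse (pcoef n a K \<chi> d qc i j)) ^ s * gauss_binom v m s)
              * F i ^ (m - s) * F j * F i ^ s)"
    proof (rule sum.cong[OF refl])
      fix s
      have "(-1)^s * v'^(s*(m-1)) * gauss_binom v' m s * (inverse q)^s
          = (- inverse (pcoef n a K \<chi> d qc i j)) ^ s * gauss_binom v m s"
      proof -
        have c0: "gauss_binom v' m s = gauss_binom v m s" unfolding v'_def by (rule gb_inv[OF vnz'])
        have c1: "(v'^(m-1))^s = v'^(s*(m-1))" by (simp only: power_mult[symmetric] mult.commute)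
        have c3: "inverse (q * v^(m-1)) = inverse q * v'^(m-1)"
          unfolding v'_def by (simp only: inverse_mult_distrib power_inverse)
        have c2: "(- inverse (q * v^(m-1)))^s = (-1)^s * ((inverse q)^s * v'^(s*(m-1)))"
          using power_minus[of "inverse (q * v^(m-1))" s] by (simp only: c3 power_mult_distrib c1)
        show ?thesis by (simp only: pE[OF i j ij, folded v_def m_def q_def] c0 c2 mult_ac)
      qed
      then show "sc ((-1)^s * v'^(s*(m-1)) * gauss_binom v' m s * (inverse q)^s) * F i^(m-s) * F j * F i^s =
          sc ((- inverse (pcoef n a K \<chi> d qc i j)) ^ s * gauss_binom v m s) * F i ^ (m - s) * F j * F i ^ s"
        by (simp only:)
    qed
    finally have SF: "(\<Sum>s = 0..m. sc ((- inverse (pcoef n a K \<chi> d qc i j)) ^ s * gauss_binom v m s)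
              * F i ^ (m - s) * F j * F i ^ s) = (adF ^^ m) (F j)" by (rule sym)
    obtain c where c0: "c \<noteq> 0" and cv: "(ad_c (\<gamma> (L i)) (\<gamma> (- L i)) (x i) ^^ m) (x j)
        = sc c * (adF ^^ m) (F j) * \<gamma> (((\<lambda>g. g + L i) ^^ m) (L j))"
      using conv[where sc=sc, OF ka gi chr[OF i] chr[OF j] cF[OF i] cF[OF j] xF xF dat[OF i i] dat[OF i j], of m]
      unfolding adF_def by blast
    define G where "G = ((\<lambda>g. g + L i) ^^ m) (L j)"
    have bkw: "(adF ^^ m) (F j) = sc (inverse c) * ((ad_c (\<gamma> (L i)) (\<gamma> (- L i)) (x i) ^^ m) (x j)) * \<gamma> (- G)"
    proof -
      have "sc (inverse c) * (sc c * (adF ^^ m) (F j) * \<gamma> G) * \<gamma> (- G)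
          = sc (inverse c * c) * ((adF ^^ m) (F j) * (\<gamma> G * \<gamma> (- G)))"
        by (simp only: scsc[OF ka] mult.assoc)
      also have "\<dots> = (adF ^^ m) (F j)" using c0 ka by (simp add: gi_inv[OF gi] sc_1)
      finally show ?thesis unfolding cv G_def by (rule sym)
    qed
    show "?thesis i j"
      unfolding m_def[symmetric] v_def[symmetric] SF
    proof
      assume "(ad_c (\<gamma> (L i)) (\<gamma> (- L i)) (x i) ^^ m) (x j) = 0"
      then show "(adF ^^ m) (F j) = 0" unfolding bkw using ka by (simp add: sc_0)
    next
      assume "(adF ^^ m) (F j) = 0"
      then show "(ad_c (\<gamma> (L i)) (\<gamma> (- L i)) (x i) ^^ m) (x j) = 0" unfolding cv by simp
    qed
  qed
  have CR: "\<And>i j. i < n \<Longrightarrow> j < n \<Longrightarrow>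
     (x j * y i - sc (\<chi> i (L j)) * y i * x j = (if j = i then sc (l j) * (1 - \<gamma> (K j + L j)) else 0))
     = (E i * F j - F j * E i = (if i = j then sc (inverse (qpar K \<chi> i i) * l i) * (\<gamma> (K i) - \<gamma> (- L i)) else 0))"
  proof -
    fix i j assume i: "i < n" and j: "j < n"
    define r where "r = inverse (\<chi> i (L j))"
    have cnz: "\<chi> i (L j) \<noteq> 0" by (rule ch_nz[OF chr[OF i]])
    have rc: "r * \<chi> i (L j) = 1" unfolding r_def using cnz by simp
    define T where "T X = - (sc r * X * \<gamma> (- L j))" for X
    have Tinv: "sc (\<chi> i (L j)) * (- T X) * \<gamma> (L j) = X" for X
    proof -
      have "sc (\<chi> i (L j)) * (- T X) * \<gamma> (L j) = sc (\<chi> i (L j) * r) * (X * (\<gamma> (- L j) * \<gamma> (L j)))"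
        unfolding T_def by (simp only: minus_minus scsc[OF ka] mult.assoc)
      also have "\<dots> = X" using rc ka by (simp add: mult.commute[of "\<chi> i (L j)"] gi_inv'[OF gi] sc_1)
      finally show ?thesis .
    qed
    have Tiff: "(A = B) = (T A = T B)" for A B
      using Tinv[of A] Tinv[of B] by metis
    have cyL: "\<gamma> (- L j) * y i = sc r * y i * \<gamma> (- L j)"
    proof -
      have "\<gamma> (- L j) * y i = sc (\<chi> i (- L j)) * y i * \<gamma> (- L j)"
        by (rule conj_comm[where sc=sc, OF gi cy[OF i]])
      then show ?thesis unfolding r_def ch_neg[OF chr[OF i]] .
    qed
    have lhs: "E i * F j - F j * E i = T (x j * y i - sc (\<chi> i (L j)) * y i * x j)"
    proof -
      have "E i * F j - F j * E i = y i * x j * \<gamma> (- L j) - x j * (\<gamma> (- L j) * y i)"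
        unfolding E_def F_def by (simp only: mult.assoc)
      also have "\<dots> = y i * x j * \<gamma> (- L j) - sc r * (x j * y i * \<gamma> (- L j))"
        unfolding cyL by (simp only: mult.assoc cenL[OF ka, of "x j" r])
      finally have A: "E i * F j - F j * E i = y i * x j * \<gamma> (- L j) - sc r * (x j * y i * \<gamma> (- L j))" .
      have B: "T (x j * y i - sc (\<chi> i (L j)) * y i * x j) = - (sc r * (x j * y i * \<gamma> (- L j)))
          + sc (r * \<chi> i (L j)) * (y i * x j * \<gamma> (- L j))"
        unfolding T_def by (simp only: diff_conv_add_uminus distrib_left distrib_right mult_minus_left mult_minus_right minus_add_distrib minus_minus mult.assoc scsc[OF ka])
      show ?thesis unfolding A B rc using ka by (simp add: sc_1)
    qed
    have rhs: "(if i = j then sc (inverse (qpar K \<chi> i i) * l i) * (\<gamma> (K i) - \<gamma> (- L i)) else 0)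
        = T (if j = i then sc (l j) * (1 - \<gamma> (K j + L j)) else 0)"
    proof (cases "i = j")
      case True
      have r': "r = inverse (qpar K \<chi> i i)" unfolding r_def qpar_def True using dat[OF j j] by simp
      have g: "\<gamma> (K j + L j) * \<gamma> (- L j) = \<gamma> (K j)"
        using gi_add[OF gi, of "K j + L j" "- L j"] by (simp add: add.assoc)
      have "T (sc (l j) * (1 - \<gamma> (K j + L j))) = sc (r * l j) * (\<gamma> (K j + L j) * \<gamma> (- L j) - \<gamma> (- L j))"
        unfolding T_def by (simp only: scsc[OF ka] mult.assoc right_diff_distrib left_diff_distrib mult_1_left minus_diff_eq)
      then show ?thesis unfolding g r' True by simp
    next
      case False
      then show ?thesis unfolding T_def using ka by (simp add: sc_0)
    qed
    show "?thesis i j" unfolding lhs rhs by (rule Tiff)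
  qed
  have PART1: "U_relations n L K \<chi> a l sc \<gamma> x y \<longleftrightarrow> new_relations n L K \<chi> a l d qc sc \<gamma> E F"
  proof
    assume U: "U_relations n L K \<chi> a l sc \<gamma> x y"
    show "new_relations n L K \<chi> a l d qc sc \<gamma> E F"
      unfolding new_relations_def
    proof (intro conjI allI impI)
      fix i j assume i: "i < n" and j: "j < n" and ij: "i \<noteq> j"
      have u: "(ad_c (\<gamma> (L i)) (\<gamma> (- L i)) (x i) ^^ nat (1 - a i j)) (x j) = 0 \<and>
        (ad_c (\<gamma> (K i)) (\<gamma> (- K i)) (y i) ^^ nat (1 - a i j)) (y j) = 0"
        using U i j ij unfolding U_relations_def by blast
      show "(\<Sum>s = 0..nat (1 - a i j).
            sc ((- pcoef n a K \<chi> d qc i j) ^ s * gauss_binom (qc i ^ d i) (nat (1 - a i j)) s)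
              * E i ^ (nat (1 - a i j) - s) * E j * E i ^ s) = 0"
        using u SEq[OF i j ij] by simp
      show "(\<Sum>s = 0..nat (1 - a i j).
            sc ((- inverse (pcoef n a K \<chi> d qc i j)) ^ s * gauss_binom (qc i ^ d i) (nat (1 - a i j)) s)
              * F i ^ (nat (1 - a i j) - s) * F j * F i ^ s) = 0"
        using u SFq[OF i j ij] by simp
    next
      fix i j assume i: "i < n" and j: "j < n"
      have "x j * y i - sc (\<chi> i (L j)) * y i * x j = (if j = i then sc (l j) * (1 - \<gamma> (K j + L j)) else 0)"
        using U i j unfolding U_relations_def by blast
      then show "E i * F j - F j * E i
         = (if i = j then sc (inverse (qpar K \<chi> i i) * l i) * (\<gamma> (K i) - \<gamma> (- L i)) else 0)"
        using CR[OF i j] by blast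
    qed
  next
    assume N: "new_relations n L K \<chi> a l d qc sc \<gamma> E F"
    show "U_relations n L K \<chi> a l sc \<gamma> x y"
      unfolding U_relations_def
    proof (intro conjI allI impI)
      fix i j assume i: "i < n" and j: "j < n" and ij: "i \<noteq> j"
      have u: "(\<Sum>s = 0..nat (1 - a i j).
            sc ((- pcoef n a K \<chi> d qc i j) ^ s * gauss_binom (qc i ^ d i) (nat (1 - a i j)) s)
              * E i ^ (nat (1 - a i j) - s) * E j * E i ^ s) = 0 \<and>
        (\<Sum>s = 0..nat (1 - a i j).
            sc ((- inverse (pcoef n a K \<chi> d qc i j)) ^ s * gauss_binom (qc i ^ d i) (nat (1 - a i j)) s)
              * F i ^ (nat (1 - a i j) - s) * F j * F i ^ s) = 0"
        using N i j ij unfolding new_relations_def by blast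
      show "(ad_c (\<gamma> (L i)) (\<gamma> (- L i)) (x i) ^^ nat (1 - a i j)) (x j) = 0"
        using u SFq[OF i j ij] by simp
      show "(ad_c (\<gamma> (K i)) (\<gamma> (- K i)) (y i) ^^ nat (1 - a i j)) (y j) = 0"
        using u SEq[OF i j ij] by simp
    next
      fix i j assume i: "i < n" and j: "j < n"
      have "E j * F i - F i * E j
         = (if j = i then sc (inverse (qpar K \<chi> j j) * l j) * (\<gamma> (K j) - \<gamma> (- L j)) else 0)"
        using N i j unfolding new_relations_def by blast
      then show "x i * y j - sc (\<chi> j (L i)) * y j * x i = (if i = j then sc (l i) * (1 - \<gamma> (K i + L i)) else 0)"
        using CR[OF j i] by blast
    qed
  qed
  show ?thesis using PART1 PART2 PART3 by blast

qed

end
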